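(* Fix an integer $p \geq 3$, put $\lambda=\lambda_p=2\cos(\pi/p)$, $S=\begin{pmatrix}1&\lambda\\0&1\end{pmatrix}$, $T=\begin{pmatrix}0&-1\\1&0\end{pmatrix}$ and $U=ST$. Suppose that $\alpha \in \mathbb{R}\cup\{\infty\}$ and $1 \leq i \leq p-1$. Then $\alpha \in \left[U^{p-i+1}(0), U^{p-i}(0)\right)$ if and only if $TU^{i}(\alpha) \in [0,\infty)$, and $\alpha = U^{p-i+1}(0)$ if and only if $TU^{i}(\alpha)=0$.
   Context: Matrices act on $\mathbb{R}\cup\{\infty\}$ as linear fractional transformations: $\begin{pmatrix}a&b\\c&d\end{pmatrix}(z)=\frac{az+b}{cz+d}$ with the usual conventions for $\infty$. One has $0=U^p(0)<U^{p-1}(0)<\cdots<U^2(0)<U(0)=\infty$, so the intervals are meaningful (with $[x,\infty)$ understood for the interval whose right endpoint is $U(0)=\infty$). *)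

theory Defs
  imports Complex_Main
begin

datatype rinf = Fin real | Infty

text \<open>Real 2x2 matrices: \<open>M a b c d\<close> stands for the matrix with rows (a, b) and (c, d).\<close>
datatype mat2 = M real real real real

fun mmul :: "mat2 \<Rightarrow> mat2 \<Rightarrow> mat2" where
  "mmul (M a b c d) (M a' b' c' d') =
     M (a*a' + b*c') (a*b' + b*d') (c*a' + d*c') (c*b' + d*d')"

definition mid :: mat2 where "mid = M 1 0 0 1"

definition mpow :: "mat2 \<Rightarrow> nat \<Rightarrow> mat2" where
  "mpow A n = ((mmul A) ^^ n) mid"

fun act :: "mat2 \<Rightarrow> rinf \<Rightarrow> rinf" where
  "act (M a b c d) (Fin x) = (if c*x + d = 0 then Infty else Fin ((a*x + b) / (c*x + d)))"
| "act (M a b c d) Infty = (if c = 0 then Infty else Fin (a / c))"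

text \<open>Half-open interval \<open>[L, R)\<close> in \<open>\<real> \<union> {\<infinity>}\<close>; when \<open>R = \<infinity>\<close> it is \<open>[L, \<infinity>)\<close>
  (not containing \<infinity>).\<close>
definition in_Ico :: "rinf \<Rightarrow> rinf \<Rightarrow> rinf \<Rightarrow> bool" where
  "in_Ico L R z = (\<exists>l x. L = Fin l \<and> z = Fin x \<and> l \<le> x \<and>
                      (R = Infty \<or> (\<exists>r. R = Fin r \<and> x < r)))"

definition lam :: "nat \<Rightarrow> real" where "lam p = 2 * cos (pi / real p)"
definition Smat :: "nat \<Rightarrow> mat2" where "Smat p = M 1 (lam p) 0 1"
definition Tmat :: mat2 where "Tmat = M 0 (-1) 1 0"
definition Umat :: "nat \<Rightarrow> mat2" where "Umat p = mmul (Smat p) Tmat"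

end

theory Submission
  imports Defs
begin

definition sq :: "nat \<Rightarrow> real \<Rightarrow> real" where
  "sq p t = sin (t * pi / real p) / sin (pi / real p)"

lemma sq_rec:
  assumes "p \<ge> 2"
  shows "sq p (t + 2) = lam p * sq p (t + 1) - sq p t"
proof -
  let ?a = "pi / real p"
  have e1: "(t + 2) * pi / real p = (t+1) * ?a + ?a" using assms by (simp add: field_simps)
  have e2: "t * pi / real p = (t+1) * ?a - ?a" using assms by (simp add: field_simps)
  have e3: "(t + 1) * pi / real p = (t+1) * ?a" by simp
  have "sin ((t+1) * ?a + ?a) + sin ((t+1) * ?a - ?a) = 2 * cos ?a * sin ((t+1) * ?a)"
    by (simp add: sin_add sin_diff)
  then show ?thesis unfolding sq_def lam_def e1 e2 e3
    by (simp add: add_divide_distrib[symmetric] diff_divide_distrib[symmetric] algebra_simps)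
qed

lemma mpow_Suc: "mpow A (Suc n) = mmul A (mpow A n)"
  by (simp add: mpow_def)

lemma mpow_U:
  assumes "p \<ge> 2"
  shows "mpow (Umat p) n = M (sq p (real n + 1)) (- sq p (real n)) (sq p (real n)) (- sq p (real n - 1))"
proof (induction n)
  case 0
  have "sin (pi / real p) \<noteq> 0"
    using assms by (intro sin_gt_zero[THEN less_imp_neq, symmetric]) (auto simp: field_simps)
  then show ?case by (simp add: mpow_def mid_def sq_def)
next
  case (Suc n)
  have r: "sq p (real n + 2) = lam p * sq p (real n + 1) - sq p (real n)"
    using sq_rec[OF assms] by simp
  have r2: "sq p (real n + 1 - 1) = sq p (real n)" by simp
  have r3: "sq p (real n + 1) = lam p * sq p (real n) - sq p (real n - 1)"
    using sq_rec[OF assms, of "real n - 1"] by (simp add: add.commute)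
  show ?case using Suc r r3
    by (simp add: mpow_Suc Umat_def Smat_def Tmat_def algebra_simps r2)
qed

fun det :: "mat2 \<Rightarrow> real" where "det (M a b c d) = a*d - b*c"

lemma det_mmul: "det (mmul A B) = det A * det B"
  by (cases A; cases B) (simp add: algebra_simps)

lemma det_mpow: "det (mpow (Umat p) n) = 1"
  by (induction n) (simp_all add: mpow_Suc det_mmul mpow_def mid_def Umat_def Smat_def Tmat_def)

lemma sq_sym: "p \<ge> 1 \<Longrightarrow> sq p (real p - t) = sq p t"
proof -
  assume "p \<ge> 1"
  then have "(real p - t) * pi / real p = pi - t * pi / real p" by (simp add: field_simps)
  then show ?thesis by (simp add: sq_def)
qed

lemma sq_pos: "p \<ge> 2 \<Longrightarrow> 0 < t \<Longrightarrow> t < real p \<Longrightarrow> sq p t > 0"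
  unfolding sq_def
  by (intro divide_pos_pos sin_gt_zero) (auto simp: field_simps)

lemma sq_p: "p \<ge> 1 \<Longrightarrow> sq p (real p) = 0"
  by (simp add: sq_def)

lemma generic:
  fixes A B C :: real
  assumes "B > 0" "C \<ge> 0" "B*B - A*C = 1"
  shows "(in_Ico (Fin (A/B)) (if C = 0 then Infty else Fin (B/C)) \<alpha>
            \<longleftrightarrow> (\<exists>x. act (M (-B) A C (-B)) \<alpha> = Fin x \<and> 0 \<le> x))
       \<and> (\<alpha> = Fin (A/B) \<longleftrightarrow> act (M (-B) A C (-B)) \<alpha> = Fin 0)"
proof (cases \<alpha>)
  case Infty
  then show ?thesis using assms by (auto simp: in_Ico_def divide_le_0_iff)
next
  case (Fin x)
  have hA: "A/B \<le> x \<longleftrightarrow> A \<le> x*B" using assms(1) by (rule pos_divide_le_eq)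
  have hAe: "x = A/B \<longleftrightarrow> x*B = A" using assms(1) by (auto simp: field_simps)
  have hC: "C > 0 \<Longrightarrow> x < B/C \<longleftrightarrow> x*C < B" by (rule pos_less_divide_eq)
  show ?thesis
  proof (cases "C*x - B = 0")
    case True
    then have C: "C > 0" using assms by (cases "C = 0") auto
    have "x = B/C" using True C by (simp add: field_simps)
    have "\<not> x*B = A"
    proof
      assume "x*B = A"
      then have "A*C = x*B*C" using C by simp
      also have "x*B*C = B*B" using True by (simp add: algebra_simps)
      finally show False using assms(3) by linarith
    qed
    moreover have "\<not> x*C < B" using True by (simp add: algebra_simps)
    ultimately show ?thesis using Fin True C hA hAe hC by (auto simp: in_Ico_def)
  next
    case False
    have act: "act (M (-B) A C (-B)) \<alpha> = Fin ((A - B*x)/(C*x - B))"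
      using Fin False by (simp add: algebra_simps)
    have p1: "(0 \<le> (A - B*x)/(C*x - B)) \<longleftrightarrow> (A \<le> x*B \<and> (C = 0 \<or> x*C < B))"
    proof (cases "C*x - B < 0")
      case True
      then have "(0 \<le> (A - B*x)/(C*x - B)) \<longleftrightarrow> A - B*x \<le> 0"
        by (simp add: zero_le_divide_iff)
      then show ?thesis using True by (auto simp: algebra_simps)
    next
      case F2: False
      then have pos: "C*x - B > 0" using False by linarith
      then have C: "C > 0" using assms by (cases "C = 0") auto
      have "(0 \<le> (A - B*x)/(C*x - B)) \<longleftrightarrow> A - B*x \<ge> 0"
        using pos by (simp add: zero_le_divide_iff)
      moreover have "\<not> (A - B*x \<ge> 0)"
      proof
        assume "A - B*x \<ge> 0"
        then have "A*C \<ge> B*x*C" using C by simp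
        moreover have "B*x*C > B*B" using pos assms(1)
          by (simp add: algebra_simps)
        ultimately show False using assms(3) by linarith
      qed
      moreover have "\<not> x*C < B" using pos by (simp add: algebra_simps)
      ultimately show ?thesis using C by (auto simp: algebra_simps)
    qed
    have p2: "(A - B*x)/(C*x - B) = 0 \<longleftrightarrow> x*B = A"
      using False assms(1) by (auto simp: algebra_simps)
    have ico: "in_Ico (Fin (A/B)) (if C = 0 then Infty else Fin (B/C)) \<alpha> \<longleftrightarrow>
        (A \<le> x*B \<and> (C = 0 \<or> x*C < B))"
      using Fin hA hC assms(2) by (auto simp: in_Ico_def)
    show ?thesis unfolding act ico using p1 p2 Fin hAe by auto
  qed
qed

theorem lemma1p1:
  fixes p i :: nat and \<alpha> :: rinf
  assumes "p \<ge> 3" and "1 \<le> i" and "i \<le> p - 1"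
  shows "(in_Ico (act (mpow (Umat p) (p - i + 1)) (Fin 0)) (act (mpow (Umat p) (p - i)) (Fin 0)) \<alpha>
            \<longleftrightarrow> (\<exists>x. act (mmul Tmat (mpow (Umat p) i)) \<alpha> = Fin x \<and> 0 \<le> x))
       \<and> (\<alpha> = act (mpow (Umat p) (p - i + 1)) (Fin 0)
            \<longleftrightarrow> act (mmul Tmat (mpow (Umat p) i)) \<alpha> = Fin 0)"
proof -
  have p2: "p \<ge> 2" "p \<ge> 1" using assms by auto
  define A where "A = sq p (real i - 1)"
  define B where "B = sq p (real i)"
  define C where "C = sq p (real i + 1)"
  have ip: "real i < real p" "real i \<ge> 1" "real i + 1 \<le> real p" using assms by auto
  have Bpos: "B > 0" unfolding B_def using ip p2 by (intro sq_pos) auto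
  have Cnn: "C \<ge> 0"
  proof (cases "real i + 1 = real p")
    case True
    then show ?thesis unfolding C_def using sq_p[OF p2(2)] by simp
  next
    case False
    then show ?thesis unfolding C_def using ip p2 by (intro less_imp_le sq_pos) auto
  qed
  have det1: "B*B - A*C = 1"
    using det_mpow[of p i] unfolding mpow_U[OF p2(1)] A_def B_def C_def
    by (simp add: algebra_simps)
  have r1: "real (p - i + 1) = real p - (real i - 1)" using assms by auto
  have r2: "real (p - i + 1) + 1 = real p - (real i - 2)" using assms by auto
  have r3: "real (p - i + 1) - 1 = real p - real i" using assms by auto
  have r4: "real (p - i) = real p - real i" using assms by auto
  have r5: "real (p - i) - 1 = real p - (real i + 1)" using assms by auto
  have r6: "real (p - i) + 1 = real p - (real i - 1)" using assms by auto
  have s1: "sq p (real p - real i) = B" unfolding B_def by (rule sq_sym[OF p2(2)])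
  have s2: "sq p (real p - (real i - 1)) = A" unfolding A_def by (rule sq_sym[OF p2(2)])
  have s3: "sq p (real p - (real i + 1)) = C" unfolding C_def by (rule sq_sym[OF p2(2)])
  have L: "act (mpow (Umat p) (p - i + 1)) (Fin 0) = Fin (A/B)"
    unfolding mpow_U[OF p2(1)] r1 r2 r3 s1 s2
    using Bpos s1 s2 by simp
  have R: "act (mpow (Umat p) (p - i)) (Fin 0) = (if C = 0 then Infty else Fin (B/C))"
    unfolding mpow_U[OF p2(1)] r4 r5 r6 s1 s2 s3
    using s1 s2 s3 by (simp add: diff_diff_eq)
  have TU: "mmul Tmat (mpow (Umat p) i) = M (-B) A C (-B)"
    unfolding mpow_U[OF p2(1)] A_def B_def C_def by (simp add: Tmat_def)
  show ?thesis unfolding L R TU using generic[OF Bpos Cnn det1] .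
qed

end
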